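(* Let $r\in\{2,-2,-3,12,-12\}$ and let $v$ be an integer such that all prime factors of $v$ are congruent to: $\pm1\bmod 8$ if $r=2$; $\pm1\bmod 12$ if $r=12$, and moreover $v^2\equiv25\bmod 32$ if $r=12$; $1$ or $3\bmod 8$ if $r=-2$; $1\bmod3$ if $r=-3$; $1\bmod 3$ if $r=-12$. Assume moreover $v\neq\pm1$ when $r=-2,-3$. Let $\mathcal U$ be the scheme over $\mathbb Z$ defined by $x^2+y^2+z^2-xyz=4+rv^2$, $U=\mathcal U\times_{\mathbb Z}\mathbb Q$, and $B=(x^2-4,r)=(y^2-4,r)=(z^2-4,r)\in\mathrm{Br}_1(U)$. Then $\mathcal U(A_{\mathbb Z})^B=\emptyset$.
   Context: $(a,r)$ is the quaternion algebra class. $\mathcal U(A_{\mathbb Z})=U(\mathbb R)\times\prod_p\mathcal U(\mathbb Z_p)$ and $\mathcal U(A_{\mathbb Z})^B$ is the set of $(M_v)_v\in\mathcal U(A_{\mathbb Z})$ with $\sum_v\mathrm{inv}_v(B(M_v))=0\in\mathbb Q/\mathbb Z$. *)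

theory Defs
  imports Complex_Main "HOL-Number_Theory.Number_Theory"
begin

text \<open>An element of Z_p is represented by its sequence of residues a n mod p^n,
  with 0 \<le> a n < p^n and a (n+1) reducing to a n.\<close>
definition Zp :: "nat \<Rightarrow> (nat \<Rightarrow> int) \<Rightarrow> bool" where
  "Zp p a \<longleftrightarrow> (\<forall>n. 0 \<le> a n \<and> a n < int p ^ n \<and> a (Suc n) mod (int p ^ n) = a n)"

definition Zp_is_zero :: "nat \<Rightarrow> (nat \<Rightarrow> int) \<Rightarrow> bool" where
  "Zp_is_zero p f \<longleftrightarrow> (\<forall>n. [f n = 0] (mod (int p ^ n)))"

text \<open>Hilbert symbol (a,r)_p = 1 for a nonzero a in Z_p (given by residues f) and r in Z:
  a X^2 + r Y^2 = Z^2 has a nontrivial solution in Q_p, equivalently a primitive one in Z_p.\<close>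
definition hilbert_trivial_p :: "nat \<Rightarrow> (nat \<Rightarrow> int) \<Rightarrow> int \<Rightarrow> bool" where
  "hilbert_trivial_p p f r \<longleftrightarrow>
     (\<exists>X Y Z. Zp p X \<and> Zp p Y \<and> Zp p Z \<and>
        \<not> (int p dvd X 1 \<and> int p dvd Y 1 \<and> int p dvd Z 1) \<and>
        (\<forall>n. [f n * (X n)^2 + r * (Y n)^2 = (Z n)^2] (mod (int p ^ n))))"

definition hilbert_trivial_R :: "real \<Rightarrow> int \<Rightarrow> bool" where
  "hilbert_trivial_R a r \<longleftrightarrow>
     (\<exists>X Y Z::real. (X, Y, Z) \<noteq> (0, 0, 0) \<and> a * X^2 + of_int r * Y^2 = Z^2)"

type_synonym Zp_triple = "(nat \<Rightarrow> int) \<times> (nat \<Rightarrow> int) \<times> (nat \<Rightarrow> int)"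

definition U_Zp_point :: "nat \<Rightarrow> int \<Rightarrow> int \<Rightarrow> Zp_triple \<Rightarrow> bool" where
  "U_Zp_point p r v P \<longleftrightarrow> (case P of (x, y, z) \<Rightarrow>
     Zp p x \<and> Zp p y \<and> Zp p z \<and>
     (\<forall>n. [(x n)^2 + (y n)^2 + (z n)^2 - x n * y n * z n = 4 + r * v^2] (mod (int p ^ n))))"

definition U_R_point :: "int \<Rightarrow> int \<Rightarrow> real \<times> real \<times> real \<Rightarrow> bool" where
  "U_R_point r v P \<longleftrightarrow> (case P of (x, y, z) \<Rightarrow>
     x^2 + y^2 + z^2 - x * y * z = 4 + of_int r * (of_int v)^2)"

text \<open>B = (x^2-4,r) = (y^2-4,r) = (z^2-4,r); evaluate using the first of these
  representatives whose first slot is nonzero at the point.\<close>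
definition B_arg_p :: "nat \<Rightarrow> Zp_triple \<Rightarrow> nat \<Rightarrow> int" where
  "B_arg_p p P = (case P of (x, y, z) \<Rightarrow>
     (let fx = (\<lambda>n. (x n)^2 - 4); fy = (\<lambda>n. (y n)^2 - 4); fz = (\<lambda>n. (z n)^2 - 4)
      in if \<not> Zp_is_zero p fx then fx else if \<not> Zp_is_zero p fy then fy else fz))"

definition B_arg_R :: "real \<times> real \<times> real \<Rightarrow> real" where
  "B_arg_R P = (case P of (x, y, z) \<Rightarrow>
     (if x^2 - 4 \<noteq> 0 then x^2 - 4 else if y^2 - 4 \<noteq> 0 then y^2 - 4 else z^2 - 4))"

text \<open>Local invariants inv_v(B(M_v)) in Q/Z, represented by 0 or 1/2 in Q.\<close>
definition inv_p :: "int \<Rightarrow> nat \<Rightarrow> Zp_triple \<Rightarrow> rat" where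
  "inv_p r p P = (if hilbert_trivial_p p (B_arg_p p P) r then 0 else 1/2)"

definition inv_R :: "int \<Rightarrow> real \<times> real \<times> real \<Rightarrow> rat" where
  "inv_R r P = (if hilbert_trivial_R (B_arg_R P) r then 0 else 1/2)"

text \<open>U(A_Z)^B: adelic points (real point, and a Z_p-point for every prime p) whose
  sum of local invariants is defined (finitely many nonzero) and is 0 in Q/Z.\<close>
definition adelic_points_B :: "int \<Rightarrow> int \<Rightarrow> ((real \<times> real \<times> real) \<times> (nat \<Rightarrow> Zp_triple)) set" where
  "adelic_points_B r v = {(Pinf, Pf).
     U_R_point r v Pinf \<and> (\<forall>p. prime p \<longrightarrow> U_Zp_point p r v (Pf p)) \<and>
     finite {p. prime p \<and> inv_p r p (Pf p) \<noteq> 0} \<and>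
     inv_R r Pinf + (\<Sum>p\<in>{p. prime p \<and> inv_p r p (Pf p) \<noteq> 0}. inv_p r p (Pf p)) \<in> \<int>}"

end

theory Submission
  imports Defs
begin
definition red3 :: "int \<Rightarrow> int \<times> int \<times> int \<Rightarrow> int \<times> int \<times> int" where
  "red3 q s = (case s of (X,Y,Z) \<Rightarrow> (X mod q, Y mod q, Z mod q))"

definition okl :: "nat \<Rightarrow> (nat \<Rightarrow> int) \<Rightarrow> int \<Rightarrow> nat \<Rightarrow> int \<times> int \<times> int \<Rightarrow> bool" where
  "okl p f r n s = (case s of (X,Y,Z) \<Rightarrow>
     0 \<le> X \<and> X < int p ^ n \<and> 0 \<le> Y \<and> Y < int p ^ n \<and> 0 \<le> Z \<and> Z < int p ^ n \<and>
     (n \<ge> 1 \<longrightarrow> \<not> (int p dvd X \<and> int p dvd Y \<and> int p dvd Z)) \<and>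
     [f n * X^2 + r * Y^2 = Z^2] (mod (int p ^ n)))"

lemma okl_red0:
  assumes p: "prime p" and compat: "\<And>n m. n \<le> m \<Longrightarrow> [f m = f n] (mod (int p ^ n))"
    and eq: "[f m * X^2 + r * Y^2 = Z^2] (mod (int p ^ m))"
    and pr: "m \<ge> 1 \<longrightarrow> \<not> (int p dvd X \<and> int p dvd Y \<and> int p dvd Z)" and nm: "n \<le> m"
  shows "okl p f r n (red3 (int p ^ n) (X,Y,Z))"
proof -
  have pp: "int p > 1" using p prime_gt_1_nat by auto
  have pn: "int p ^ n > 0" using pp by simp
  have dvdpow: "int p ^ n dvd int p ^ m" using nm by (simp add: le_imp_power_dvd)
  hence eq1: "[f m * X^2 + r * Y^2 = Z^2] (mod (int p ^ n))" using cong_dvd_modulus eq by blast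
  have c1: "[f n * (X mod int p ^ n)^2 + r * (Y mod int p ^ n)^2 = f m * X^2 + r * Y^2] (mod (int p ^ n))"
    by (intro cong_add cong_mult cong_pow compat[OF nm, THEN cong_sym] cong_refl) (simp_all add: cong_def)
  have c2: "[(Z mod int p ^ n)^2 = Z^2] (mod (int p ^ n))"
    by (intro cong_pow) (simp add: cong_def)
  have main: "[f n * (X mod int p ^ n)^2 + r * (Y mod int p ^ n)^2 = (Z mod int p ^ n)^2] (mod (int p ^ n))"
    using c1 eq1 c2 by (meson cong_sym cong_trans)
  have prim: "n \<ge> 1 \<longrightarrow> \<not> (int p dvd X mod int p ^ n \<and> int p dvd Y mod int p ^ n \<and> int p dvd Z mod int p ^ n)"
  proof
    assume n1: "n \<ge> 1"
    have pd: "int p dvd int p ^ n" using n1 by (simp add: dvd_power)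
    have m1: "m \<ge> 1" using n1 nm by simp
    have "\<not> (int p dvd X \<and> int p dvd Y \<and> int p dvd Z)" using pr m1 by simp
    moreover have "\<And>W. int p dvd W mod int p ^ n \<longleftrightarrow> int p dvd W"
      using pd by (metis dvd_mod_iff)
    ultimately show "\<not> (int p dvd X mod int p ^ n \<and> int p dvd Y mod int p ^ n \<and> int p dvd Z mod int p ^ n)" by simp
  qed
  show ?thesis using main prim pn by (simp add: okl_def red3_def)
qed

lemma okl_red:
  assumes p: "prime p" and compat: "\<And>n m. n \<le> m \<Longrightarrow> [f m = f n] (mod (int p ^ n))"
    and ok: "okl p f r m s" and nm: "n \<le> m"
  shows "okl p f r n (red3 (int p ^ n) s)"
proof -
  obtain X Y Z where s: "s = (X,Y,Z)" by (cases s) auto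
  show ?thesis unfolding s by (rule okl_red0[OF p compat _ _ nm]) (use ok s in \<open>auto simp: okl_def\<close>)
qed

lemma red3_red3:
  assumes "a dvd b" "a > 0" shows "red3 a (red3 b s) = red3 a s"
  using assms by (cases s) (simp add: red3_def mod_mod_cancel)

lemma okl_finite: "finite {s. okl p f r n s}"
proof -
  have "{s. okl p f r n s} \<subseteq> {0..<int p ^ n} \<times> {0..<int p ^ n} \<times> {0..<int p ^ n}"
    by (auto simp: okl_def)
  thus ?thesis by (rule finite_subset) auto
qed

definition goodl where
  "goodl p f r n s \<longleftrightarrow> okl p f r n s \<and> (\<forall>m\<ge>n. \<exists>t. okl p f r m t \<and> red3 (int p ^ n) t = s)"

lemma goodl_step:
  assumes p: "prime p" and compat: "\<And>n m. n \<le> m \<Longrightarrow> [f m = f n] (mod (int p ^ n))"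
    and g: "goodl p f r n s"
  shows "\<exists>s'. goodl p f r (Suc n) s' \<and> red3 (int p ^ n) s' = s"
proof (rule ccontr)
  assume nex: "\<not> ?thesis"
  have pp: "int p > 1" using p prime_gt_1_nat by auto
  let ?S = "{s'. okl p f r (Suc n) s' \<and> red3 (int p ^ n) s' = s}"
  have fin: "finite ?S" using okl_finite[of p f r "Suc n"] by (rule finite_subset[rotated]) auto
  have "\<forall>s'\<in>?S. \<exists>m. m \<ge> Suc n \<and> \<not> (\<exists>t. okl p f r m t \<and> red3 (int p ^ Suc n) t = s')"
  proof
    fix s' assume "s' \<in> ?S"
    hence "\<not> goodl p f r (Suc n) s'" using nex by blast
    thus "\<exists>m. m \<ge> Suc n \<and> \<not> (\<exists>t. okl p f r m t \<and> red3 (int p ^ Suc n) t = s')"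
      using \<open>s' \<in> ?S\<close> unfolding goodl_def by blast
  qed
  then obtain mm where mm: "\<And>s'. s' \<in> ?S \<Longrightarrow> mm s' \<ge> Suc n \<and> \<not> (\<exists>t. okl p f r (mm s') t \<and> red3 (int p ^ Suc n) t = s')"
    by (metis (no_types, lifting) bchoice)
  define M where "M = Max (insert (Suc n) (mm ` ?S))"
  have Mge: "M \<ge> Suc n" unfolding M_def using fin by simp
  have "\<exists>t. okl p f r M t \<and> red3 (int p ^ n) t = s" using g Mge unfolding goodl_def by (meson Suc_leD)
  then obtain t where t: "okl p f r M t" "red3 (int p ^ n) t = s" by blast
  define s' where "s' = red3 (int p ^ Suc n) t"
  have oks': "okl p f r (Suc n) s'" unfolding s'_def by (rule okl_red[OF p compat t(1) Mge])
  have "red3 (int p ^ n) s' = red3 (int p ^ n) t" unfolding s'_def using pp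
    by (intro red3_red3 le_imp_power_dvd) auto
  hence "red3 (int p ^ n) s' = s" using t(2) by simp
  hence inS: "s' \<in> ?S" using oks' by simp
  have "mm s' \<le> M" unfolding M_def using fin inS by (intro Max_ge) auto
  have "okl p f r (mm s') (red3 (int p ^ mm s') t)" by (rule okl_red[OF p compat t(1) \<open>mm s' \<le> M\<close>])
  moreover have "red3 (int p ^ Suc n) (red3 (int p ^ mm s') t) = red3 (int p ^ Suc n) t"
    using pp mm[OF inS] by (intro red3_red3 le_imp_power_dvd) auto
  hence "red3 (int p ^ Suc n) (red3 (int p ^ mm s') t) = s'" unfolding s'_def by simp
  ultimately show False using mm[OF inS] by blast
qed

lemma hilbert_trivial_from_levels:
  assumes p: "prime p" and compat: "\<And>n m. n \<le> m \<Longrightarrow> [f m = f n] (mod (int p ^ n))"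
    and sol: "\<And>n. n \<ge> N0 \<Longrightarrow> \<exists>X Y Z. \<not> (int p dvd X \<and> int p dvd Y \<and> int p dvd Z) \<and>
                [f n * X^2 + r * Y^2 = Z^2] (mod (int p ^ n))"
  shows "hilbert_trivial_p p f r"
proof -
  have pp: "int p > 1" using p prime_gt_1_nat by auto
  have exok: "\<exists>t. okl p f r m t" if "m \<ge> 1" for m
  proof -
    obtain X Y Z where s: "\<not> (int p dvd X \<and> int p dvd Y \<and> int p dvd Z)"
      "[f (max m N0) * X^2 + r * Y^2 = Z^2] (mod (int p ^ (max m N0)))" using sol[of "max m N0"] by auto
    have ok: "okl p f r (max m N0) (red3 (int p ^ max m N0) (X,Y,Z))"
      by (rule okl_red0[OF p compat]) (use s in auto)
    hence "okl p f r m (red3 (int p ^ m) (red3 (int p ^ max m N0) (X,Y,Z)))"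
      by (intro okl_red[OF p compat ok]) auto
    thus ?thesis by blast
  qed
  have g0: "goodl p f r 0 (0,0,0)"
  proof -
    have "\<exists>t. okl p f r m t \<and> red3 (int p ^ 0) t = (0,0,0)" for m
    proof -
      obtain t where "okl p f r (max m 1) t" using exok[of "max m 1"] by auto
      hence "okl p f r m (red3 (int p ^ m) t)" by (intro okl_red[OF p compat]) auto
      moreover have "red3 (int p ^ 0) u = (0,0,0)" for u by (cases u) (simp add: red3_def)
      ultimately show ?thesis by blast
    qed
    thus ?thesis by (simp add: goodl_def okl_def cong_def)
  qed
  define nxt where "nxt n s = (SOME s'. goodl p f r (Suc n) s' \<and> red3 (int p ^ n) s' = s)" for n s
  define S where "S = rec_nat (0,0,0) nxt"
  have S0: "S 0 = (0,0,0)" and SS: "S (Suc n) = nxt n (S n)" for n by (simp_all add: S_def)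
  have gS: "goodl p f r n (S n) \<and> (\<forall>k. n = Suc k \<longrightarrow> red3 (int p ^ k) (S n) = S k)" for n
  proof (induction n)
    case 0 thus ?case using g0 S0 by simp
  next
    case (Suc n)
    hence "goodl p f r n (S n)" by simp
    from goodl_step[OF p compat this] have "goodl p f r (Suc n) (nxt n (S n)) \<and> red3 (int p ^ n) (nxt n (S n)) = S n"
      unfolding nxt_def by (rule someI_ex)
    thus ?case using SS by simp
  qed
  define X where "X n = fst (S n)" for n
  define Y where "Y n = fst (snd (S n))" for n
  define Z where "Z n = snd (snd (S n))" for n
  have okS: "okl p f r n (X n, Y n, Z n)" for n using gS[of n] by (simp add: goodl_def X_def Y_def Z_def)
  have redS: "X (Suc n) mod int p ^ n = X n \<and> Y (Suc n) mod int p ^ n = Y n \<and> Z (Suc n) mod int p ^ n = Z n" for n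
  proof -
    have "S n = red3 (int p ^ n) (S (Suc n))" using gS[of "Suc n"] by simp
    thus ?thesis by (simp add: red3_def X_def Y_def Z_def split: prod.splits)
  qed
  show ?thesis unfolding hilbert_trivial_p_def
  proof (intro exI conjI allI)
    show "Zp p X" "Zp p Y" "Zp p Z" using okS redS by (auto simp: Zp_def okl_def)
    show "\<not> (int p dvd X 1 \<and> int p dvd Y 1 \<and> int p dvd Z 1)" using okS[of 1] by (simp add: okl_def)
    show "[f n * (X n)^2 + r * (Y n)^2 = (Z n)^2] (mod (int p ^ n))" for n using okS[of n] by (simp add: okl_def)
  qed
qed

lemma hensel2_aux:
  fixes c :: int
  assumes c: "[c = 1] (mod 8)" and n: "n \<ge> 3"
  shows "\<exists>z. odd z \<and> [z^2 = c] (mod 2^n)"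
  using n
proof (induction n rule: dec_induct)
  case base
  show ?case by (rule exI[of _ 1]) (use c in \<open>simp add: cong_sym\<close>)
next
  case (step n)
  then obtain z where z: "odd z" "[z^2 = c] (mod 2^n)" by blast
  then obtain k where k: "z^2 = c + 2^n * k" by (metis cong_iff_lin cong_sym)
  show ?case
  proof (cases "even k")
    case True
    then obtain k' where "k = 2 * k'" by blast
    hence "z^2 = c + 2^Suc n * k'" using k by simp
    hence "[z^2 = c] (mod 2^Suc n)" by (metis cong_iff_lin cong_sym)
    thus ?thesis using z by blast
  next
    case False
    have "even (k + z)" using False z(1) by simp
    then obtain j where j: "k + z = 2 * j" by blast
    obtain m where m: "n = m + 3" using step(1) by (metis add.commute le_Suc_ex)
    have e: "(2::int)^(n-1) = 4 * 2^m" "(2::int)^n = 8 * 2^m" "(2::int)^Suc n = 16 * 2^m" using m by (simp_all add: power_add)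
    have "(z + 2^(n-1))^2 = z^2 + 2^n * z + 2^(n-1) * 2^(n-1)"
      using e by (simp add: power2_eq_square algebra_simps)
    also have "\<dots> = c + 2^Suc n * (j + 2^m)"
    proof -
      have kk: "k = 2*j - z" using j by simp
      show ?thesis unfolding e k kk by (simp add: algebra_simps)
    qed
    finally have "[(z + 2^(n-1))^2 = c] (mod 2^Suc n)" by (metis cong_iff_lin cong_sym)
    moreover have "odd (z + 2^(n-1))" using z(1) e by simp
    ultimately show ?thesis by blast
  qed
qed

lemma hensel2:
  fixes c :: int
  assumes c: "[c = 1] (mod 8)"
  shows "\<exists>z. [z^2 = c] (mod 2^n)"
proof -
  obtain z where "[z^2 = c] (mod 2^(max n 3))" using hensel2_aux[OF c, of "max n 3"] by auto
  moreover have "(2::int)^n dvd 2^(max n 3)" by (simp add: le_imp_power_dvd)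
  ultimately show ?thesis using cong_dvd_modulus by blast
qed

lemma henselp_aux:
  fixes c :: int
  assumes p: "prime (p::int)" "odd p" and c: "[z0^2 = c] (mod p)" and z0: "\<not> p dvd z0" and n: "n \<ge> 1"
  shows "\<exists>z. \<not> p dvd z \<and> [z^2 = c] (mod p^n)"
  using n
proof (induction n rule: dec_induct)
  case base
  show ?case using c z0 by auto
next
  case (step n)
  then obtain z where z: "\<not> p dvd z" "[z^2 = c] (mod p^n)" by blast
  then obtain k where k: "z^2 = c + p^n * k" by (metis cong_iff_lin cong_sym)
  have cop: "coprime (2*z) p"
  proof -
    have "\<not> p dvd 2"
    proof
      assume d: "p dvd 2"
      have "p > 1" using p(1) prime_gt_1_int by blast
      moreover have "p \<le> 2" using d zdvd_imp_le by simp
      ultimately have "p = 2" by simp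
      thus False using p(2) by simp
    qed
    hence "\<not> p dvd 2 * z" using z(1) p(1) by (simp add: prime_dvd_mult_iff)
    from prime_imp_coprime[OF p(1) this] show ?thesis by (metis coprime_commute)
  qed
  obtain u where u: "[(2*z) * u = 1] (mod p)" using cong_solve_coprime_int[OF cop] by blast
  define t where "t = - k * u"
  have "[k + 2*z*t = k - k * ((2*z)*u)] (mod p)" by (simp add: t_def algebra_simps)
  moreover have "[k - k * ((2*z)*u) = k - k * 1] (mod p)" by (intro cong_diff cong_mult cong_refl u)
  ultimately have "[k + 2*z*t = 0] (mod p)" using cong_trans by fastforce
  then obtain j where j: "k + 2*z*t = p * j" by (metis cong_0_iff dvd_def)
  have pn: "p^n = p * p^(n-1)" using step(1) by (simp add: power_eq_if)
  have "(z + t * p^n)^2 = z^2 + p^n * (2*z*t) + t^2 * p^n * p^n" by (simp add: power2_eq_square algebra_simps)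
  also have "\<dots> = c + p^n * (k + 2*z*t) + t^2 * p^n * p^n" using k by (simp add: algebra_simps)
  also have "\<dots> = c + p^Suc n * (j + t^2 * p^(n-1))" using j pn by (simp add: algebra_simps)
  finally have "[(z + t * p^n)^2 = c] (mod p^Suc n)" by (metis cong_iff_lin cong_sym)
  moreover have "\<not> p dvd z + t * p^n"
  proof
    assume "p dvd z + t * p^n"
    moreover have "p dvd t * p^n" using pn by simp
    ultimately have "p dvd z" using dvd_add_left_iff by blast
    thus False using z(1) by simp
  qed
  ultimately show ?case by blast
qed

lemma henselp:
  fixes c :: int
  assumes p: "prime (p::int)" "odd p" and c: "[z0^2 = c] (mod p)" and z0: "\<not> p dvd z0"
  shows "\<exists>z. \<not> p dvd z \<and> [z^2 = c] (mod p^n)"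
proof -
  obtain z where "\<not> p dvd z" "[z^2 = c] (mod p^(max n 1))" using henselp_aux[OF p c z0, of "max n 1"] by auto
  moreover have "p^n dvd p^(max n 1)" by (simp add: le_imp_power_dvd)
  ultimately show ?thesis using cong_dvd_modulus by blast
qed

lemma sq_inj_aux:
  fixes p x y c :: int
  assumes p: "prime p" and cp: "\<not> p dvd c"
    and x: "0 \<le> x" "2 * x < p" and y: "0 \<le> y" "2 * y < p"
    and e: "p dvd c * (x^2 - y^2)"
  shows "x = y"
proof -
  have "p dvd x^2 - y^2" using e cp p by (simp add: prime_dvd_mult_iff)
  hence "p dvd (x - y) * (x + y)" by (simp add: power2_eq_square algebra_simps)
  hence "p dvd x - y \<or> p dvd x + y" using p by (simp add: prime_dvd_mult_iff)
  thus ?thesis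
  proof
    assume "p dvd x - y"
    moreover have "\<bar>x - y\<bar> < p" using x y by auto
    ultimately show ?thesis by (cases "x - y = 0") (use dvd_imp_le_int[of "x-y" p] p prime_gt_1_int[of p] in auto)
  next
    assume d: "p dvd x + y"
    have "x + y < p" using x y by auto
    hence "x + y = 0" using d x y by (cases "x + y = 0") (use dvd_imp_le_int[of "x+y" p] p prime_gt_1_int[of p] in auto)
    thus ?thesis using x y by simp
  qed
qed

lemma two_squares_unit:
  fixes p a r :: int
  assumes p: "prime p" "odd p" and a: "\<not> p dvd a" and r: "\<not> p dvd r"
  shows "\<exists>X Y. [a * X^2 + r * Y^2 = 1] (mod p)"
proof (rule ccontr)
  assume nex: "\<not> ?thesis"
  define h where "h = (p - 1) div 2"
  have p2: "p = 2 * h + 1" using p(2) unfolding h_def by presburger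
  have "p > 1" using p(1) prime_gt_1_int by blast
  hence hpos: "h \<ge> 0" using p2 by simp
  define S1 where "S1 = (\<lambda>x. (a * x^2) mod p) ` {0..h}"
  define S2 where "S2 = (\<lambda>y. (1 - r * y^2) mod p) ` {0..h}"
  have inj1: "inj_on (\<lambda>x. (a * x^2) mod p) {0..h}"
  proof (rule inj_onI)
    fix x y assume xy: "x \<in> {0..h}" "y \<in> {0..h}" "(a * x^2) mod p = (a * y^2) mod p"
    hence "p dvd a * x^2 - a * y^2" by (simp add: mod_eq_dvd_iff)
    hence "p dvd a * (x^2 - y^2)" by (simp add: algebra_simps)
    thus "x = y" using sq_inj_aux[OF p(1) a] xy p2 by auto
  qed
  have inj2: "inj_on (\<lambda>y. (1 - r * y^2) mod p) {0..h}"
  proof (rule inj_onI)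
    fix x y assume xy: "x \<in> {0..h}" "y \<in> {0..h}" "(1 - r * x^2) mod p = (1 - r * y^2) mod p"
    hence "p dvd (1 - r * x^2) - (1 - r * y^2)" by (simp add: mod_eq_dvd_iff)
    hence "p dvd (-r) * (x^2 - y^2)" by (simp add: algebra_simps)
    moreover have "\<not> p dvd -r" using r by simp
    ultimately show "x = y" using sq_inj_aux[OF p(1), of "-r"] xy p2 by auto
  qed
  have c1: "card S1 = nat (h + 1)" unfolding S1_def using card_image[OF inj1] hpos by simp
  have c2: "card S2 = nat (h + 1)" unfolding S2_def using card_image[OF inj2] hpos by simp
  have ppos: "p > 0" using \<open>p > 1\<close> by simp
  have sub: "S1 \<union> S2 \<subseteq> {0..<p}" unfolding S1_def S2_def using ppos by auto
  have disj: "S1 \<inter> S2 = {}"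
  proof (rule ccontr)
    assume "S1 \<inter> S2 \<noteq> {}"
    then obtain x y where "(a * x^2) mod p = (1 - r * y^2) mod p" unfolding S1_def S2_def by auto
    hence "[a * x^2 = 1 - r * y^2] (mod p)" unfolding cong_def .
    from cong_add[OF this cong_refl[of "r * y^2"]] have "[a * x^2 + r * y^2 = 1] (mod p)" by simp
    thus False using nex by blast
  qed
  have fin: "finite S1" "finite S2" unfolding S1_def S2_def by auto
  have "card (S1 \<union> S2) = card S1 + card S2" using card_Un_disjoint[OF fin disj] .
  also have "\<dots> = nat p + 1" using c1 c2 p2 hpos by simp
  finally have "card (S1 \<union> S2) = nat p + 1" .
  moreover have "card (S1 \<union> S2) \<le> card {0..<p}" by (rule card_mono) (use sub in auto)
  ultimately show False by simp
qed

lemma legendre_cong1_eq1: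
  assumes p: "prime p" "2 < p" and c: "[Legendre a (int p) = 1] (mod int p)"
  shows "Legendre a (int p) = 1"
proof -
  have "Legendre a (int p) \<in> {-1, 0, 1}" by (auto simp: Legendre_def)
  moreover have "\<not> [0 = 1] (mod int p)" using p by (simp add: cong_def)
  moreover have "\<not> [-1 = 1] (mod int p)"
  proof
    assume "[-1 = 1] (mod int p)"
    hence "int p dvd 2" by (simp add: cong_iff_dvd_diff)
    hence "int p \<le> 2" using zdvd_imp_le[of "int p" 2] by simp
    thus False using p by simp
  qed
  ultimately show ?thesis using c by auto
qed

lemma qr_of_euler:
  assumes p: "prime p" "2 < p" and c: "[a ^ ((p - 1) div 2) = 1] (mod int p)"
  shows "\<exists>y. [y^2 = a] (mod int p)"
proof -
  have "[Legendre a (int p) = 1] (mod int p)" using euler_criterion[OF p, of a] c cong_trans by blast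
  hence "Legendre a (int p) = 1" by (rule legendre_cong1_eq1[OF p])
  thus ?thesis by (auto simp: Legendre_def QuadRes_def split: if_splits)
qed

lemma pow_legendre:
  assumes p: "prime p" "2 < p" 
  shows "[a ^ ((p - 1) div 2) = Legendre a (int p)] (mod int p)"
  using euler_criterion[OF p, of a] by (simp add: cong_sym)

lemma legendre_two:
  assumes p: "prime p" "2 < p"
  shows "Legendre 2 (int p) = (-1) ^ (nat ((int p - 1) div 2) - nat ((int p - 1) div 2) div 2)"
proof -
  interpret G: GAUSS p 2
  proof unfold_locales
    show "[2 \<noteq> 0] (mod int p)" using p by (simp add: cong_def)
  qed (use p in auto)
  define h where "h = (int p - 1) div 2"
  have hp: "2 * h < int p" "2 * h \<ge> 0" unfolding h_def using p by auto
  have C: "G.C = G.B"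
  proof -
    have "x mod int p = x" if "x \<in> G.B" for x using that hp unfolding G.B_def G.A_def h_def by auto
    thus ?thesis unfolding G.C_def by (simp add: image_cong[OF refl] cong: image_cong)
  qed
  have E: "G.E = (\<lambda>x. x * 2) ` {h div 2 <.. h}"
    unfolding G.E_def C G.B_def G.A_def h_def[symmetric] by auto
  have "card G.E = card {h div 2 <.. h}" unfolding E by (rule card_image) (auto simp: inj_on_def)
  also have "\<dots> = nat (h - h div 2)" by simp
  finally have "card G.E = nat h - nat h div 2" using hp by (simp add: nat_div_distrib nat_diff_distrib)
  thus ?thesis using G.gauss_lemma unfolding h_def by simp
qed

lemma legendre_two':
  assumes p: "prime p" "2 < p"
  shows "Legendre 2 (int p) = (-1) ^ ((p - 1) div 2 - (p - 1) div 2 div 2)"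
proof -
  have "nat ((int p - 1) div 2) = (p - 1) div 2" using p by (simp add: nat_div_distrib nat_diff_distrib)
  thus ?thesis using legendre_two[OF p] by simp
qed

lemma legendre_1_qr: "Legendre a p = 1 \<Longrightarrow> \<exists>y. [y^2 = a] (mod p)"
  by (auto simp: Legendre_def QuadRes_def split: if_splits)

lemma qr_two:
  assumes p: "prime p" and m: "p mod 8 = 1 \<or> p mod 8 = 7"
  shows "\<exists>y. [y^2 = 2] (mod int p)"
proof -
  have p2: "2 < p" using p m prime_gt_1_nat[OF p] by (cases "p = 2") auto
  define k where "k = p div 8"
  have pk: "p = 8 * k + p mod 8" unfolding k_def by simp
  have "even ((p - 1) div 2 - (p - 1) div 2 div 2)"
    using m proof
    assume "p mod 8 = 1" hence "p = 8 * k + 1" using pk by simp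
    thus ?thesis by simp
  next
    assume "p mod 8 = 7" hence "p = 8 * k + 7" using pk by simp
    hence "(p - 1) div 2 = 4 * k + 3" by simp
    moreover have "(4 * k + 3) div 2 = 2 * k + 1" by presburger
    ultimately show ?thesis by simp
  qed
  hence "Legendre 2 (int p) = 1" using legendre_two'[OF p p2] by simp
  thus ?thesis by (rule legendre_1_qr)
qed

lemma qr_mtwo:
  assumes p: "prime p" and m: "p mod 8 = 1 \<or> p mod 8 = 3"
  shows "\<exists>y. [y^2 = -2] (mod int p)"
proof -
  have p2: "2 < p" using p m prime_gt_1_nat[OF p] by (cases "p = 2") auto
  define h where "h = (p - 1) div 2"
  have "[(2::int) ^ h = (-1) ^ (h - h div 2)] (mod int p)"
    using pow_legendre[OF p p2, of 2] legendre_two'[OF p p2] unfolding h_def by simp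
  hence "[(-1) ^ h * (2::int) ^ h = (-1) ^ h * (-1) ^ (h - h div 2)] (mod int p)" by (intro cong_mult cong_refl)
  moreover have "(-1::int) ^ h * (-1) ^ (h - h div 2) = 1"
  proof -
    define k where "k = p div 8"
    have pk: "p = 8 * k + p mod 8" unfolding k_def by simp
    have "even (h + (h - h div 2))"
      using m proof
      assume "p mod 8 = 1" hence "p = 8 * k + 1" using pk by simp
      hence "h = 4 * k" unfolding h_def by simp
      thus ?thesis by simp
    next
      assume "p mod 8 = 3" hence "p = 8 * k + 3" using pk by simp
      hence "h = 4 * k + 1" unfolding h_def by simp
      thus ?thesis by simp
    qed
    thus ?thesis by (simp add: power_add[symmetric])
  qed
  moreover have "(-1::int) ^ h * 2 ^ h = (-2) ^ h" by (simp add: power_mult_distrib[symmetric])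
  ultimately have "[(-2::int) ^ ((p - 1) div 2) = 1] (mod int p)" unfolding h_def by simp
  thus ?thesis by (rule qr_of_euler[OF p p2])
qed

lemma legendre_p_3:
  assumes "p mod 3 = 1 \<or> p mod 3 = 2"
  shows "Legendre (int p) 3 = (if p mod 3 = 1 then 1 else -1)"
proof -
  have ipm: "int p mod 3 = int (p mod 3)" by (simp add: zmod_int)
  hence nz: "\<not> [int p = 0] (mod 3)" using assms by (auto simp: cong_def)
  show ?thesis
  proof (cases "p mod 3 = 1")
    case True
    have "[1^2 = int p] (mod 3)" using True ipm by (simp add: cong_def)
    hence "QuadRes 3 (int p)" unfolding QuadRes_def by blast
    thus ?thesis using nz True by (simp add: Legendre_def)
  next
    case False
    hence p2: "int p mod 3 = 2" using assms ipm by simp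
    have "\<not> QuadRes 3 (int p)"
    proof
      assume "QuadRes 3 (int p)"
      then obtain y where "[y^2 = int p] (mod 3)" unfolding QuadRes_def by blast
      hence "(y mod 3)^2 mod 3 = 2" using p2 by (simp add: cong_def power_mod)
      moreover have "y mod 3 = 0 \<or> y mod 3 = 1 \<or> y mod 3 = 2" by auto
      ultimately show False by auto
    qed
    thus ?thesis using nz False by (simp add: Legendre_def)
  qed
qed

lemma legendre_3_p:
  assumes p: "prime p" "2 < p" "p \<noteq> 3" and m: "p mod 3 = 1 \<or> p mod 3 = 2"
  shows "Legendre 3 (int p) = (-1) ^ ((p - 1) div 2) * (if p mod 3 = 1 then 1 else -1)"
proof -
  have "Legendre (int p) (int 3) * Legendre (int 3) (int p) = (-1::int) ^ ((p - 1) div 2 * ((3 - 1) div 2))"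
    by (rule Quadratic_Reciprocity) (use p in auto)
  hence e: "(if p mod 3 = 1 then 1 else -1) * Legendre 3 (int p) = (-1::int) ^ ((p - 1) div 2)"
    using legendre_p_3[OF m] by simp
  show ?thesis
  proof (cases "p mod 3 = 1")
    case True thus ?thesis using e by simp
  next
    case False
    hence "Legendre 3 (int p) = - ((-1) ^ ((p - 1) div 2))" using e by simp
    thus ?thesis using False by simp
  qed
qed

lemma qr_mthree:
  assumes p: "prime p" and m: "p mod 3 = 1"
  shows "\<exists>y. [y^2 = -3] (mod int p)"
proof -
  have p2: "2 < p" "p \<noteq> 3" using p m prime_gt_1_nat[OF p] by (cases "p = 2"; auto)+
  define h where "h = (p - 1) div 2"
  have "[(3::int) ^ h = (-1) ^ h] (mod int p)"
    using pow_legendre[OF p p2(1), of 3] legendre_3_p[OF p p2] m unfolding h_def by simp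
  hence "[(-1) ^ h * (3::int) ^ h = (-1) ^ h * (-1) ^ h] (mod int p)" by (intro cong_mult cong_refl)
  moreover have "(-1::int) ^ h * (-1) ^ h = 1" by (simp add: power_add[symmetric])
  moreover have "(-1::int) ^ h * 3 ^ h = (-3) ^ h" by (simp add: power_mult_distrib[symmetric])
  ultimately have "[(-3::int) ^ ((p - 1) div 2) = 1] (mod int p)" unfolding h_def by simp
  thus ?thesis by (rule qr_of_euler[OF p p2(1)])
qed

lemma qr_three:
  assumes p: "prime p" and m: "p mod 12 = 1 \<or> p mod 12 = 11"
  shows "\<exists>y. [y^2 = 3] (mod int p)"
proof -
  have p2: "2 < p" "p \<noteq> 3" using p m prime_gt_1_nat[OF p] by (cases "p = 2"; auto)+
  define k where "k = p div 12"
  have pk: "p = 12 * k + p mod 12" unfolding k_def by simp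
  have m3: "p mod 3 = 1 \<or> p mod 3 = 2" 
  proof -
    have "p mod 3 = p mod 12 mod 3" by (rule mod_mod_cancel[symmetric]) simp
    thus ?thesis using m by auto
  qed
  have "Legendre 3 (int p) = 1"
  proof (cases "p mod 12 = 1")
    case True
    hence pe: "p = 12 * k + 1" using pk by simp
    hence "even ((p - 1) div 2)" "p mod 3 = 1" by presburger+
    thus ?thesis using legendre_3_p[OF p p2 m3] by simp
  next
    case False
    hence pe: "p = 12 * k + 11" using pk m by simp
    hence "(p - 1) div 2 = 6 * k + 5" by simp
    hence "odd ((p - 1) div 2)" by simp
    moreover have "p mod 3 = 2" using pe by presburger
    ultimately show ?thesis using legendre_3_p[OF p p2 m3] by simp
  qed
  thus ?thesis by (rule legendre_1_qr)
qed

lemma modM: "[x mod M = (x::int)] (mod M)" by (simp add: cong_def)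

lemma sq16: "[(X mod 16)^2 = (X::int)^2] (mod 32)"
proof -
  define q where "q = X div 16" 
  define s where "s = X mod 16"
  have e: "X = 16 * q + s" unfolding q_def s_def by simp
  have "X^2 - s^2 = 32 * (q * (8 * q + s))" unfolding e by (simp add: power2_eq_square algebra_simps)
  hence "[X^2 = s^2] (mod 32)" by (simp add: cong_iff_dvd_diff)
  thus ?thesis unfolding s_def by (rule cong_sym)
qed

lemma in_upto: "0 \<le> a \<Longrightarrow> a \<le> b \<Longrightarrow> a \<in> set [0..(b::int)]" by simp

lemma even_mod16: "even ((X::int) mod 16) \<longleftrightarrow> even X"
  by (metis dvd_mod_iff even_numeral)

lemma mod_in8: "(X::int) mod 8 \<in> set [0..7]" by simp
lemma mod_in9: "(X::int) mod 9 \<in> set [0..8]" by simp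
lemma mod_in16: "(X::int) mod 16 \<in> set [0..15]" by simp
lemma mod_in32: "(X::int) mod 32 \<in> set [0..31]" by simp
lemma evm8: "even ((X::int) mod 8) \<longleftrightarrow> even X" by (rule dvd_mod_iff) simp
lemma evm16: "even ((X::int) mod 16) \<longleftrightarrow> even X" by (rule dvd_mod_iff) simp
lemma dvd3m9: "3 dvd ((X::int) mod 9) \<longleftrightarrow> 3 dvd X" by (rule dvd_mod_iff) simp

lemma cong_zero_iff: "[(A::int) = B] (mod M) \<longleftrightarrow> (A - B) mod M = 0"
  by (simp add: cong_iff_dvd_diff dvd_eq_mod_eq_0)

lemma even_modI: "even ((X::int) mod (2 * k)) \<Longrightarrow> even X"
  by (metis dvd_mod_iff dvd_triv_left)

lemma bf_sq8: "\<forall>v\<in>set [0..7::int]. odd v \<longrightarrow> v^2 mod 8 = 1" by code_simp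

lemma odd_sq8: assumes "odd (v::int)" shows "[v^2 = 1] (mod 8)"
proof -
  have "[(v mod 8)^2 = v^2] (mod 8)" by (intro cong_pow modM)
  moreover have "odd (v mod 8)" using assms by (simp add: evm8) 
  ultimately show ?thesis using bf_sq8[rule_format, OF mod_in8] unfolding cong_def by auto
qed

lemma bf_V2a: "\<forall>a\<in>set [0..15]. \<forall>b\<in>set [0..15]. \<forall>c\<in>set [0..15::int].
   (a^2+b^2+c^2-a*b*c) mod 16 = 6 \<longrightarrow> (odd a \<or> a mod 8 = 4)"
  by code_simp

lemma bf_H5: "\<forall>X\<in>set [0..7]. \<forall>Y\<in>set [0..7]. \<forall>Z\<in>set [0..7::int].
   (5*X^2+2*Y^2-Z^2) mod 8 = 0 \<longrightarrow> (even X \<and> even Y \<and> even Z)"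
  by code_simp

lemma bf_x4: "\<forall>a\<in>set [0..15::int]. a mod 8 = 4 \<longrightarrow> (a^2 - 4) mod 32 = 12" by code_simp

lemma bf_H12: "\<forall>X\<in>set [0..15]. \<forall>Y\<in>set [0..15]. \<forall>Z\<in>set [0..15::int].
   (12*X^2+2*Y^2-Z^2) mod 32 = 0 \<longrightarrow> (even X \<and> even Y \<and> even Z)"
  by code_simp

lemma E_red:
  fixes x y z :: int
  shows "[(x mod M)^2+(y mod M)^2+(z mod M)^2-(x mod M)*(y mod M)*(z mod M) = x^2+y^2+z^2-x*y*z] (mod M)"
  by (intro cong_add cong_diff cong_mult cong_pow modM)

lemma SP2a:
  fixes v x y z X Y Z :: int
  assumes v: "odd v" and E: "[x^2+y^2+z^2-x*y*z = 4 + 2*v^2] (mod 32)"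
    and H: "[(x^2-4)*X^2 + 2*Y^2 = Z^2] (mod 32)"
  shows "even X \<and> even Y \<and> even Z"
proof -
  obtain k where k: "1 = v^2 + 8 * k" using odd_sq8[OF v] unfolding cong_iff_lin by blast
  have m: "[4 + 2*v^2 = 6] (mod 16)" unfolding cong_iff_lin by (rule exI[of _ k]) (use k in simp)
  have "[x^2+y^2+z^2-x*y*z = 4 + 2*v^2] (mod 16)" by (rule cong_dvd_modulus[OF E]) simp
  hence E16: "[x^2+y^2+z^2-x*y*z = 6] (mod 16)" using m cong_trans by blast
  have "((x mod 16)^2+(y mod 16)^2+(z mod 16)^2-(x mod 16)*(y mod 16)*(z mod 16)) mod 16 = 6"
    using cong_trans[OF E_red E16] unfolding cong_def by simp
  hence "odd (x mod 16) \<or> (x mod 16) mod 8 = 4" by (rule bf_V2a[rule_format, OF mod_in16 mod_in16 mod_in16])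
  hence xc: "odd x \<or> x mod 8 = 4" by (auto simp: evm16 mod_mod_cancel)
  show ?thesis
  proof (cases "odd x")
    case True
    have "[x^2 - 4 = 1 - 4] (mod 8)" by (intro cong_diff odd_sq8 True cong_refl)
    hence a: "[x^2 - 4 = 5] (mod 8)" by (simp add: cong_def)
    have "[(x^2-4)*X^2 + 2*Y^2 = Z^2] (mod 8)" by (rule cong_dvd_modulus[OF H]) simp
    moreover have "[5*(X mod 8)^2 + 2*(Y mod 8)^2 = (x^2-4)*X^2 + 2*Y^2] (mod 8)"
      by (intro cong_add cong_mult cong_pow modM cong_refl a[THEN cong_sym])
    moreover have "[(Z mod 8)^2 = Z^2] (mod 8)" by (intro cong_pow modM)
    ultimately have "[5*(X mod 8)^2 + 2*(Y mod 8)^2 = (Z mod 8)^2] (mod 8)" by (meson cong_sym cong_trans)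
    hence "(5*(X mod 8)^2 + 2*(Y mod 8)^2 - (Z mod 8)^2) mod 8 = 0" by (simp add: cong_zero_iff)
    hence "even (X mod 8) \<and> even (Y mod 8) \<and> even (Z mod 8)" by (rule bf_H5[rule_format, OF mod_in8 mod_in8 mod_in8])
    thus ?thesis by (simp add: evm8)
  next
    case False
    hence x4: "x mod 8 = 4" using xc by simp
    have "(x mod 16) mod 8 = 4" using x4 by (simp add: mod_mod_cancel)
    hence "((x mod 16)^2 - 4) mod 32 = 12" by (rule bf_x4[rule_format, OF mod_in16])
    moreover have "[(x mod 16)^2 - 4 = x^2 - 4] (mod 32)" by (intro cong_diff sq16 cong_refl)
    ultimately have a: "[x^2 - 4 = 12] (mod 32)" unfolding cong_def by simp
    have "[12*(X mod 16)^2 + 2*(Y mod 16)^2 = (x^2-4)*X^2 + 2*Y^2] (mod 32)"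
      by (intro cong_add cong_mult sq16 cong_refl a[THEN cong_sym])
    moreover have "[(Z mod 16)^2 = Z^2] (mod 32)" by (rule sq16)
    ultimately have "[12*(X mod 16)^2 + 2*(Y mod 16)^2 = (Z mod 16)^2] (mod 32)" using H by (meson cong_sym cong_trans)
    hence "(12*(X mod 16)^2 + 2*(Y mod 16)^2 - (Z mod 16)^2) mod 32 = 0" by (simp add: cong_zero_iff)
    hence "even (X mod 16) \<and> even (Y mod 16) \<and> even (Z mod 16)" by (rule bf_H12[rule_format, OF mod_in16 mod_in16 mod_in16])
    thus ?thesis by (simp add: evm16)
  qed
qed

lemma bf_V2b: "\<forall>a\<in>set [0..15]. \<forall>b\<in>set [0..15]. \<forall>c\<in>set [0..15::int].
   (a^2+b^2+c^2-a*b*c) mod 16 = 2 \<longrightarrow> (odd a \<or> a mod 8 = 0)"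
  by code_simp

lemma bf_H5m: "\<forall>X\<in>set [0..7]. \<forall>Y\<in>set [0..7]. \<forall>Z\<in>set [0..7::int].
   (5*X^2+(-2)*Y^2-Z^2) mod 8 = 0 \<longrightarrow> (even X \<and> even Y \<and> even Z)"
  by code_simp

lemma bf_x0: "\<forall>a\<in>set [0..15::int]. a mod 8 = 0 \<longrightarrow> (a^2 - 4) mod 32 = 28" by code_simp

lemma bf_H28: "\<forall>X\<in>set [0..15]. \<forall>Y\<in>set [0..15]. \<forall>Z\<in>set [0..15::int].
   (28*X^2+(-2)*Y^2-Z^2) mod 32 = 0 \<longrightarrow> (even X \<and> even Y \<and> even Z)"
  by code_simp

lemma SP2b:
  fixes v x y z X Y Z :: int
  assumes v: "odd v" and E: "[x^2+y^2+z^2-x*y*z = 4 + (-2)*v^2] (mod 32)"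
    and H: "[(x^2-4)*X^2 + (-2)*Y^2 = Z^2] (mod 32)"
  shows "even X \<and> even Y \<and> even Z"
proof -
  obtain k where k: "1 = v^2 + 8 * k" using odd_sq8[OF v] unfolding cong_iff_lin by blast
  have m: "[4 + (-2)*v^2 = 2] (mod 16)" unfolding cong_iff_lin by (rule exI[of _ "-k"]) (use k in simp)
  have "[x^2+y^2+z^2-x*y*z = 4 + (-2)*v^2] (mod 16)" by (rule cong_dvd_modulus[OF E]) simp
  hence E16: "[x^2+y^2+z^2-x*y*z = 2] (mod 16)" using m cong_trans by blast
  have "((x mod 16)^2+(y mod 16)^2+(z mod 16)^2-(x mod 16)*(y mod 16)*(z mod 16)) mod 16 = 2"
    using cong_trans[OF E_red E16] unfolding cong_def by simp
  hence "odd (x mod 16) \<or> (x mod 16) mod 8 = 0" by (rule bf_V2b[rule_format, OF mod_in16 mod_in16 mod_in16])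
  hence xc: "odd x \<or> x mod 8 = 0" by (auto simp: evm16 mod_mod_cancel)
  show ?thesis
  proof (cases "odd x")
    case True
    have "[x^2 - 4 = 1 - 4] (mod 8)" by (intro cong_diff odd_sq8 True cong_refl)
    hence a: "[x^2 - 4 = 5] (mod 8)" by (simp add: cong_def)
    have "[(x^2-4)*X^2 + (-2)*Y^2 = Z^2] (mod 8)" by (rule cong_dvd_modulus[OF H]) simp
    moreover have "[5*(X mod 8)^2 + (-2)*(Y mod 8)^2 = (x^2-4)*X^2 + (-2)*Y^2] (mod 8)"
      by (intro cong_add cong_mult cong_pow modM cong_refl a[THEN cong_sym])
    moreover have "[(Z mod 8)^2 = Z^2] (mod 8)" by (intro cong_pow modM)
    ultimately have "[5*(X mod 8)^2 + (-2)*(Y mod 8)^2 = (Z mod 8)^2] (mod 8)" by (meson cong_sym cong_trans)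
    hence "(5*(X mod 8)^2 + (-2)*(Y mod 8)^2 - (Z mod 8)^2) mod 8 = 0" by (simp only: cong_zero_iff)
    hence "even (X mod 8) \<and> even (Y mod 8) \<and> even (Z mod 8)" by (rule bf_H5m[rule_format, OF mod_in8 mod_in8 mod_in8])
    thus ?thesis by (simp add: evm8)
  next
    case False
    hence x4: "x mod 8 = 0" using xc by simp
    have "(x mod 16) mod 8 = 0" using x4 by (simp add: mod_mod_cancel)
    hence "((x mod 16)^2 - 4) mod 32 = 28" by (rule bf_x0[rule_format, OF mod_in16])
    moreover have "[(x mod 16)^2 - 4 = x^2 - 4] (mod 32)" by (intro cong_diff sq16 cong_refl)
    ultimately have a: "[x^2 - 4 = 28] (mod 32)" unfolding cong_def by simp
    have "[28*(X mod 16)^2 + (-2)*(Y mod 16)^2 = (x^2-4)*X^2 + (-2)*Y^2] (mod 32)"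
      by (intro cong_add cong_mult sq16 cong_refl a[THEN cong_sym])
    moreover have "[(Z mod 16)^2 = Z^2] (mod 32)" by (rule sq16)
    ultimately have "[28*(X mod 16)^2 + (-2)*(Y mod 16)^2 = (Z mod 16)^2] (mod 32)" using H by (meson cong_sym cong_trans)
    hence "(28*(X mod 16)^2 + (-2)*(Y mod 16)^2 - (Z mod 16)^2) mod 32 = 0" by (simp only: cong_zero_iff)
    hence "even (X mod 16) \<and> even (Y mod 16) \<and> even (Z mod 16)" by (rule bf_H28[rule_format, OF mod_in16 mod_in16 mod_in16])
    thus ?thesis by (simp add: evm16)
  qed
qed

lemma bf_v9: "\<forall>v\<in>set [0..8::int]. \<not> 3 dvd v \<longrightarrow> v^2 mod 9 \<in> {1,4,7}" by code_simp

lemma bf_S3a: "\<forall>r\<in>{-3,-12::int}. \<forall>a\<in>set [0..8]. \<forall>b\<in>set [0..8]. \<forall>c\<in>set [0..8::int].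
   (a^2+b^2+c^2-a*b*c) mod 9 = (4 + r) mod 9 \<longrightarrow> a \<in> {0,1,3,6,8}"
  by code_simp

lemma bf_S3b: "\<forall>a\<in>set [0..8]. \<forall>b\<in>set [0..8]. \<forall>c\<in>set [0..8::int].
   (a^2+b^2+c^2-a*b*c) mod 9 = (4 + 12) mod 9 \<longrightarrow> a \<in> {0,3,4,5,6}"
  by code_simp

lemma bf_T3a: "\<forall>r\<in>{-3,-12::int}. \<forall>a\<in>{0,1,3,6,8::int}. \<forall>X\<in>set [0..8]. \<forall>Y\<in>set [0..8]. \<forall>Z\<in>set [0..8::int].
   ((a^2-4)*X^2+r*Y^2-Z^2) mod 9 = 0 \<longrightarrow> (3 dvd X \<and> 3 dvd Y \<and> 3 dvd Z)"
  by code_simp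

lemma bf_T3b: "\<forall>a\<in>{0,3,4,5,6::int}. \<forall>X\<in>set [0..8]. \<forall>Y\<in>set [0..8]. \<forall>Z\<in>set [0..8::int].
   ((a^2-4)*X^2+12*Y^2-Z^2) mod 9 = 0 \<longrightarrow> (3 dvd X \<and> 3 dvd Y \<and> 3 dvd Z)"
  by code_simp

lemma SP3:
  fixes r v x y z X Y Z :: int
  assumes r: "r \<in> {-3,12,-12}" and v: "\<not> 3 dvd v" and E: "[x^2+y^2+z^2-x*y*z = 4 + r*v^2] (mod 9)"
    and H: "[(x^2-4)*X^2 + r*Y^2 = Z^2] (mod 9)"
  shows "3 dvd X \<and> 3 dvd Y \<and> 3 dvd Z"
proof -
  have "\<not> 3 dvd (v mod 9)" using v by (simp add: dvd3m9)
  hence "(v mod 9)^2 mod 9 \<in> {1,4,7}" by (rule bf_v9[rule_format, OF mod_in9])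
  moreover have "(v mod 9)^2 mod 9 = v^2 mod 9" by (simp add: power_mod)
  ultimately have "v^2 mod 9 \<in> {1,4,7}" by simp
  hence "v^2 mod 9 mod 3 = 1" by auto
  hence "v^2 mod 3 = 1" by (simp add: mod_mod_cancel)
  hence d1: "3 dvd v^2 - 1" by (simp add: mod_eq_dvd_iff[symmetric] )
  have d2: "3 dvd r" using r by auto
  have "9 dvd r * (v^2 - 1)" using mult_dvd_mono[OF d2 d1] by simp
  hence "[r*v^2 = r] (mod 9)" by (simp add: cong_iff_dvd_diff algebra_simps)
  hence "[4 + r*v^2 = 4 + r] (mod 9)" by (intro cong_add cong_refl)
  hence E9: "[x^2+y^2+z^2-x*y*z = 4 + r] (mod 9)" using E cong_trans cong_sym by blast
  have Ered: "((x mod 9)^2+(y mod 9)^2+(z mod 9)^2-(x mod 9)*(y mod 9)*(z mod 9)) mod 9 = (4 + r) mod 9"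
    using cong_trans[OF E_red E9] unfolding cong_def by simp
  have "[((x mod 9)^2-4)*(X mod 9)^2 + r*(Y mod 9)^2 = (x^2-4)*X^2 + r*Y^2] (mod 9)"
    by (intro cong_add cong_diff cong_mult cong_pow modM cong_refl)
  moreover have "[(Z mod 9)^2 = Z^2] (mod 9)" by (intro cong_pow modM)
  ultimately have "[((x mod 9)^2-4)*(X mod 9)^2 + r*(Y mod 9)^2 = (Z mod 9)^2] (mod 9)" using H by (meson cong_sym cong_trans)
  hence Hred: "(((x mod 9)^2-4)*(X mod 9)^2 + r*(Y mod 9)^2 - (Z mod 9)^2) mod 9 = 0" by (simp only: cong_zero_iff)
  have "3 dvd (X mod 9) \<and> 3 dvd (Y mod 9) \<and> 3 dvd (Z mod 9)"
  proof (cases "r = 12")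
    case True
    have "x mod 9 \<in> {0,3,4,5,6}" using bf_S3b[rule_format, OF mod_in9 mod_in9 mod_in9] Ered True by simp
    moreover have "(((x mod 9)^2-4)*(X mod 9)^2 + 12*(Y mod 9)^2 - (Z mod 9)^2) mod 9 = 0" using Hred True by (simp only:)
    ultimately show ?thesis by (rule bf_T3b[rule_format, OF _ mod_in9 mod_in9 mod_in9])
  next
    case False
    hence r': "r \<in> {-3,-12}" using r by auto
    have "x mod 9 \<in> {0,1,3,6,8}" using bf_S3a[rule_format, OF r' mod_in9 mod_in9 mod_in9] Ered by simp
    thus ?thesis using Hred by (rule bf_T3a[rule_format, OF r' _ mod_in9 mod_in9 mod_in9])
  qed
  thus ?thesis by (simp add: dvd3m9)
qed

lemma bf_F12: "\<forall>a\<in>set [0..15]. \<forall>b\<in>set [0..15]. \<forall>c\<in>set [0..15::int].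
   (a^2+b^2+c^2-2*a*b*c) mod 32 \<noteq> 12"
  by code_simp

lemma bf_Fm12: "\<forall>a\<in>set [0..7]. \<forall>b\<in>set [0..7]. \<forall>c\<in>set [0..7::int].
   (a^2+b^2+c^2-2*a*b*c) mod 8 \<noteq> 6"
  by code_simp

lemma E_even: "(2*a)^2+(2*b)^2+(2*c)^2-(2*a)*(2*b)*(2*c) = 4 * (a^2+b^2+c^2-2*a*b*(c::int))"
  by (simp add: power2_eq_square algebra_simps)

lemma dvd128_4: "(128::int) dvd 4 * g \<Longrightarrow> 32 dvd g"
proof -
  assume "128 dvd 4 * g" then obtain q where "4 * g = 128 * q" by (auto simp: dvd_def)
  hence "g = 32 * q" by simp
  thus ?thesis by simp
qed

lemma dvd32_4: "(32::int) dvd 4 * g \<Longrightarrow> 8 dvd g"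
proof -
  assume "32 dvd 4 * g" then obtain q where "4 * g = 32 * q" by (auto simp: dvd_def)
  hence "g = 8 * q" by simp
  thus ?thesis by simp
qed

lemma SO_m3:
  fixes v x y z :: int
  assumes v: "odd v" and n: "n \<ge> 1" and E: "[x^2+y^2+z^2-x*y*z = 4 + (-3)*v^2] (mod 2^n)"
  shows "odd x \<or> odd y \<or> odd z"
proof (rule ccontr)
  assume "\<not> ?thesis"
  hence ev: "even x" "even y" "even z" by auto
  have "[x^2+y^2+z^2-x*y*z = 4 + (-3)*v^2] (mod 2)" by (rule cong_dvd_modulus[OF E]) (use n in \<open>simp add: dvd_power\<close>)
  hence "even (x^2+y^2+z^2-x*y*z) \<longleftrightarrow> even (4 + (-3)*v^2)" by (simp add: cong_def even_iff_mod_2_eq_zero)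
  moreover have "even (x^2+y^2+z^2-x*y*z)" using ev by auto
  moreover have "odd (4 + (-3)*v^2)" using v by simp
  ultimately show False by simp
qed

lemma SO_12:
  fixes v x y z :: int
  assumes v: "[v^2 = 25] (mod 32)" and n: "n \<ge> 7" and E: "[x^2+y^2+z^2-x*y*z = 4 + 12*v^2] (mod 2^n)"
  shows "odd x \<or> odd y \<or> odd z"
proof (rule ccontr)
  assume "\<not> ?thesis"
  then obtain a b c where abc: "x = 2*a" "y = 2*b" "z = 2*c" by (auto elim!: evenE)
  have "[x^2+y^2+z^2-x*y*z = 4 + 12*v^2] (mod 128)"
    by (rule cong_dvd_modulus[OF E]) (use n in \<open>simp add: le_imp_power_dvd[of 7 n "2::int", simplified]\<close>)
  hence d: "128 dvd 4 * (a^2+b^2+c^2-2*a*b*c) - (4 + 12*v^2)" unfolding abc E_even by (simp add: cong_iff_dvd_diff)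
  obtain k where k: "v^2 = 25 + 32 * k" using cong_sym[OF v] unfolding cong_iff_lin by blast
  define F where "F = a^2+b^2+c^2-2*a*b*c"
  have eq: "4 * F - (4 + 12*v^2) = 4 * (F - 76 - 96*k)" by (simp add: k algebra_simps)
  have d': "128 dvd 4 * F - (4 + 12*v^2)" unfolding F_def by (rule d)
  hence "128 dvd 4 * (F - 76 - 96*k)" by (simp only: eq)
  hence "32 dvd F - 76 - 96*k" by (rule dvd128_4)
  hence "32 dvd (F - 76 - 96*k) + 32 * (2 + 3 * k)" by (rule dvd_add) auto
  hence "32 dvd (a^2+b^2+c^2-2*a*b*c) - 12" unfolding F_def by (simp add: algebra_simps)
  hence F: "[a^2+b^2+c^2-2*a*b*c = 12] (mod 32)" by (simp add: cong_iff_dvd_diff)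
  have "[(a mod 16)*(b mod 16)*(c mod 16) = a*b*c] (mod 16)" by (intro cong_mult modM)
  hence "[2*((a mod 16)*(b mod 16)*(c mod 16)) = 2*(a*b*c)] (mod 32)"
  proof -
    from \<open>[(a mod 16)*(b mod 16)*(c mod 16) = a*b*c] (mod 16)\<close> have "16 dvd (a mod 16)*(b mod 16)*(c mod 16) - a*b*c"
      by (simp add: cong_iff_dvd_diff)
    hence "2 * 16 dvd 2 * ((a mod 16)*(b mod 16)*(c mod 16) - a*b*c)" by (rule mult_dvd_mono[OF dvd_refl])
    thus ?thesis by (simp add: cong_iff_dvd_diff right_diff_distrib)
  qed
  hence "[(a mod 16)^2+(b mod 16)^2+(c mod 16)^2-2*((a mod 16)*(b mod 16)*(c mod 16)) = a^2+b^2+c^2-2*(a*b*c)] (mod 32)"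
    by (intro cong_add cong_diff sq16)
  hence "((a mod 16)^2+(b mod 16)^2+(c mod 16)^2-2*(a mod 16)*(b mod 16)*(c mod 16)) mod 32 = 12"
    using F unfolding cong_def by (simp add: mult.assoc)
  thus False using bf_F12[rule_format, OF mod_in16 mod_in16 mod_in16] by simp
qed

lemma SO_m12:
  fixes v x y z :: int
  assumes v: "odd v" and n: "n \<ge> 5" and E: "[x^2+y^2+z^2-x*y*z = 4 + (-12)*v^2] (mod 2^n)"
  shows "odd x \<or> odd y \<or> odd z"
proof (rule ccontr)
  assume "\<not> ?thesis"
  then obtain a b c where abc: "x = 2*a" "y = 2*b" "z = 2*c" by (auto elim!: evenE)
  have "[x^2+y^2+z^2-x*y*z = 4 + (-12)*v^2] (mod 32)"
    by (rule cong_dvd_modulus[OF E]) (use n in \<open>simp add: le_imp_power_dvd[of 5 n "2::int", simplified]\<close>)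
  hence d: "32 dvd 4 * (a^2+b^2+c^2-2*a*b*c) - (4 + (-12)*v^2)" unfolding abc E_even by (simp add: cong_iff_dvd_diff)
  obtain k where k: "1 = v^2 + 8 * k" using odd_sq8[OF v] unfolding cong_iff_lin by blast
  hence k': "v^2 = 1 - 8 * k" by simp
  define F where "F = a^2+b^2+c^2-2*a*b*c"
  have eq: "4 * F - (4 + (-12)*v^2) = 4 * (F + 2 - 24*k)" by (simp add: k' algebra_simps)
  have d': "32 dvd 4 * F - (4 + (-12)*v^2)" unfolding F_def by (rule d)
  hence "32 dvd 4 * (F + 2 - 24*k)" by (simp only: eq)
  hence "8 dvd F + 2 - 24*k" by (rule dvd32_4)
  hence "8 dvd (F + 2 - 24*k) - 8 * (1 - 3 * k)" by (rule dvd_diff) auto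
  hence "8 dvd (a^2+b^2+c^2-2*a*b*c) - 6" unfolding F_def by (simp add: algebra_simps)
  hence F: "[a^2+b^2+c^2-2*a*b*c = 6] (mod 8)" by (simp add: cong_iff_dvd_diff)
  have "[(a mod 8)^2+(b mod 8)^2+(c mod 8)^2-2*(a mod 8)*(b mod 8)*(c mod 8) = a^2+b^2+c^2-2*a*b*c] (mod 8)"
    by (intro cong_add cong_diff cong_mult cong_pow modM cong_refl)
  hence "((a mod 8)^2+(b mod 8)^2+(c mod 8)^2-2*(a mod 8)*(b mod 8)*(c mod 8)) mod 8 = 6"
    using F unfolding cong_def by simp
  thus False using bf_Fm12[rule_format, OF mod_in8 mod_in8 mod_in8] by simp
qed

lemma brahma: "((w::int)^2 - r*t^2)*(c^2 - r*d^2) = (w*c + r*t*d)^2 - r*(w*d + t*c)^2"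
  by (simp add: power2_eq_square algebra_simps)

lemma E_ident: "(2*y - x*z)^2 - (x^2-4)*(z^2-4) = 4*((x^2+y^2+z^2-x*y*z) - (4::int))"
  by (simp add: power2_eq_square algebra_simps)

lemma transfer_gen:
  fixes M a b w r t c d :: int
  assumes h1: "[a*b = w^2 - r*t^2] (mod M)" and h2: "[b = c^2 - r*d^2] (mod M)"
  shows "[a*b^2 + r*(w*d+t*c)^2 = (w*c+r*t*d)^2] (mod M)"
proof -
  have "[a*b*b = (w^2 - r*t^2)*(c^2 - r*d^2)] (mod M)" by (rule cong_mult[OF h1 h2])
  hence "[a*b^2 = (w*c + r*t*d)^2 - r*(w*d + t*c)^2] (mod M)" unfolding brahma by (simp add: power2_eq_square mult.assoc)
  hence "[a*b^2 + r*(w*d+t*c)^2 = (w*c + r*t*d)^2 - r*(w*d + t*c)^2 + r*(w*d+t*c)^2] (mod M)" by (rule cong_add[OF _ cong_refl])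
  thus ?thesis by simp
qed

lemma level2_x_odd:
  fixes x r d :: int
  assumes x: "odd x" and rd: "[r*d^2 = 4] (mod 8)"
  shows "\<exists>X Y Z. \<not> (2 dvd X \<and> 2 dvd Y \<and> 2 dvd Z) \<and> [(x^2-4)*X^2 + r*Y^2 = Z^2] (mod 2^n)"
proof -
  have "[x^2 - 4 + r*d^2 = 1 - 4 + 4] (mod 8)" by (intro cong_add cong_diff odd_sq8 x rd cong_refl)
  hence "[x^2 - 4 + r*d^2 = 1] (mod 8)" by simp
  then obtain Z where Z: "[Z^2 = x^2 - 4 + r*d^2] (mod 2^n)" using hensel2 by blast
  show ?thesis
    by (rule exI[of _ 1], rule exI[of _ d], rule exI[of _ Z]) (use Z in \<open>simp add: cong_sym\<close>)
qed

lemma level2_z_odd: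
  fixes x y z r d v :: int
  assumes z: "odd z" and rd: "[r*d^2 = 4] (mod 8)" and E: "[x^2+y^2+z^2-x*y*z = 4 + r*v^2] (mod 2^n)"
  shows "\<exists>X Y Z. \<not> (2 dvd X \<and> 2 dvd Y \<and> 2 dvd Z) \<and> [(x^2-4)*X^2 + r*Y^2 = Z^2] (mod 2^n)"
proof -
  define b where "b = z^2 - 4"
  have "[z^2 - 4 + r*d^2 = 1 - 4 + 4] (mod 8)" by (intro cong_add cong_diff odd_sq8 z rd cong_refl)
  hence "[b + r*d^2 = 1] (mod 8)" unfolding b_def by simp
  then obtain c where c: "[c^2 = b + r*d^2] (mod 2^n)" using hensel2 by blast
  have h2: "[b = c^2 - r*d^2] (mod 2^n)"
  proof -
    have "[c^2 - r*d^2 = b + r*d^2 - r*d^2] (mod 2^n)" by (rule cong_diff[OF c cong_refl])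
    thus ?thesis by (simp add: cong_sym)
  qed
  define w where "w = 2*y - x*z"
  define t where "t = 2*v"
  have "[(x^2+y^2+z^2-x*y*z) - 4 = r*v^2] (mod 2^n)" using cong_diff[OF E cong_refl[of 4]] by simp
  hence "[4*((x^2+y^2+z^2-x*y*z) - 4) = 4*(r*v^2)] (mod 2^n)" by (rule cong_mult[OF cong_refl])
  hence "[w^2 - 4*((x^2+y^2+z^2-x*y*z) - 4) = w^2 - 4*(r*v^2)] (mod 2^n)" by (rule cong_diff[OF cong_refl])
  moreover have "w^2 - 4*((x^2+y^2+z^2-x*y*z) - 4) = (x^2-4)*b" unfolding w_def b_def using E_ident[of y x z] by simp
  moreover have "4*(r*v^2) = r*t^2" unfolding t_def by (simp add: power2_eq_square)
  ultimately have h1: "[(x^2-4)*b = w^2 - r*t^2] (mod 2^n)" by simp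
  have "odd b" using z unfolding b_def by simp
  thus ?thesis using transfer_gen[OF h1 h2] by blast
qed

lemma level2_any:
  fixes x y z r d v :: int
  assumes rd: "[r*d^2 = 4] (mod 8)" and E: "[x^2+y^2+z^2-x*y*z = 4 + r*v^2] (mod 2^n)"
    and odd: "odd x \<or> odd y \<or> odd z"
  shows "\<exists>X Y Z. \<not> (2 dvd X \<and> 2 dvd Y \<and> 2 dvd Z) \<and> [(x^2-4)*X^2 + r*Y^2 = Z^2] (mod 2^n)"
proof -
  consider "odd x" | "odd z" | "odd y" using odd by blast
  thus ?thesis
  proof cases
    case 1 thus ?thesis using level2_x_odd[OF _ rd] by blast
  next
    case 2 thus ?thesis using level2_z_odd[OF _ rd E] by blast
  next
    case 3
    have eq: "x^2+z^2+y^2-x*z*y = x^2+y^2+z^2-x*y*z" by (simp add: algebra_simps)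
    have E': "[x^2+z^2+y^2-x*z*y = 4 + r*v^2] (mod 2^n)" unfolding eq by (rule E)
    show ?thesis using level2_z_odd[OF 3 rd E'] by blast
  qed
qed

lemma level_odd:
  fixes p r v x y z :: int
  assumes p: "prime p" "odd p" and pr: "\<not> p dvd r" and qr: "p dvd v \<Longrightarrow> \<exists>s. [s^2 = r] (mod p)"
    and E: "[x^2+y^2+z^2-x*y*z = 4 + r*v^2] (mod p^n)"
  shows "\<exists>X Y Z. \<not> (p dvd X \<and> p dvd Y \<and> p dvd Z) \<and> [(x^2-4)*X^2 + r*Y^2 = Z^2] (mod p^n)"
proof (cases "n = 0")
  case True
  have "\<not> p dvd 1" using p(1) by (simp add: prime_int_iff)
  thus ?thesis using True by (intro exI[of _ 1] exI[of _ 0]) (simp add: cong_def)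
next
  case False
  have Ep: "[x^2+y^2+z^2-x*y*z = 4 + r*v^2] (mod p)" by (rule cong_dvd_modulus[OF E]) (use False in \<open>simp add: dvd_power\<close>)
  hence Ep4: "[(x^2+y^2+z^2-x*y*z) - 4 = r*v^2] (mod p)" using cong_diff[OF Ep cong_refl[of 4]] by simp
  have np1: "\<not> p dvd 1" using p(1) by (simp add: prime_int_iff)
  show ?thesis
  proof (cases "p dvd x^2 - 4")
    case False
    obtain X0 Y0 where XY: "[(x^2-4) * X0^2 + r * Y0^2 = 1] (mod p)" using two_squares_unit[OF p False pr] by blast
    obtain Z where Z: "\<not> p dvd Z" "[Z^2 = (x^2-4) * X0^2 + r * Y0^2] (mod p^n)"
      using henselp[OF p, of 1 "(x^2-4) * X0^2 + r * Y0^2"] XY np1 by (auto simp: cong_sym)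
    show ?thesis using Z by (intro exI[of _ X0] exI[of _ Y0] exI[of _ Z]) (simp add: cong_sym)
  next
    case True
    have "\<exists>s. [s^2 = r] (mod p)"
    proof (cases "p dvd v")
      case True thus ?thesis using qr by blast
    next
      case nv: False
      have cop: "coprime v p" by (rule coprime_commute[THEN iffD1, OF prime_imp_coprime[OF p(1) nv]])
      obtain u where u: "[v * u = 1] (mod p)" using cong_solve_coprime_int[OF cop] by blast
      have "p dvd (x - 2) * (x + 2)" using True by (simp add: power2_eq_square algebra_simps)
      hence "p dvd x - 2 \<or> p dvd x + 2" using p(1) by (simp add: prime_dvd_mult_iff)
      then obtain q where q: "[q^2 = r*v^2] (mod p)"
      proof
        assume d: "p dvd x - 2"
        have id: "(x^2+y^2+z^2-x*y*z) - 4 = (y-z)^2 + (x-2)*(x+2-y*z)" by (simp add: power2_eq_square algebra_simps)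
        have z0: "[(x-2)*(x+2-y*z) = 0] (mod p)" using d by (simp add: cong_0_iff)
        have c1: "[(y-z)^2 + (x-2)*(x+2-y*z) = (y-z)^2] (mod p)" using cong_add[OF cong_refl[of "(y-z)^2"] z0] by simp
        have "[(y-z)^2 + (x-2)*(x+2-y*z) = r*v^2] (mod p)" using Ep4 unfolding id .
        hence "[(y-z)^2 = r*v^2] (mod p)" by (rule cong_trans[OF cong_sym[OF c1]])
        thus ?thesis by (rule that)
      next
        assume d: "p dvd x + 2"
        have id: "(x^2+y^2+z^2-x*y*z) - 4 = (y+z)^2 + (x+2)*(x-2-y*z)" by (simp add: power2_eq_square algebra_simps)
        have z0: "[(x+2)*(x-2-y*z) = 0] (mod p)" using d by (simp add: cong_0_iff)
        have c1: "[(y+z)^2 + (x+2)*(x-2-y*z) = (y+z)^2] (mod p)" using cong_add[OF cong_refl[of "(y+z)^2"] z0] by simp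
        have "[(y+z)^2 + (x+2)*(x-2-y*z) = r*v^2] (mod p)" using Ep4 unfolding id .
        hence "[(y+z)^2 = r*v^2] (mod p)" by (rule cong_trans[OF cong_sym[OF c1]])
        thus ?thesis by (rule that)
      qed
      have "[(q*u)^2 = r*v^2*u^2] (mod p)" using cong_mult[OF q cong_refl[of "u^2"]] by (simp add: power_mult_distrib)
      moreover have "[r*(v*u)^2 = r*1^2] (mod p)" by (intro cong_mult cong_pow u cong_refl)
      moreover have "r*v^2*u^2 = r*(v*u)^2" by (simp add: power_mult_distrib)
      ultimately have "[(q*u)^2 = r] (mod p)" using cong_trans by fastforce
      thus ?thesis by blast
    qed
    then obtain s where s: "[s^2 = r] (mod p)" by blast
    have ns: "\<not> p dvd s"
    proof
      assume "p dvd s"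
      hence "p dvd s^2" by (simp add: power2_eq_square)
      hence "p dvd r" using s by (simp add: cong_dvd_iff)
      thus False using pr by simp
    qed
    obtain Z where Z: "\<not> p dvd Z" "[Z^2 = r] (mod p^n)" using henselp[OF p s ns] by blast
    show ?thesis using Z np1 by (intro exI[of _ 0] exI[of _ 1] exI[of _ Z]) (simp add: cong_sym)
  qed
qed

lemma Zp_mod:
  assumes Z: "Zp p a" and kn: "k \<le> n"
  shows "a n mod int p ^ k = a k"
  using kn
proof (induction n rule: dec_induct)
  case base
  thus ?case using Z unfolding Zp_def by (simp add: mod_pos_pos_trivial)
next
  case (step n)
  have dv: "int p ^ k dvd int p ^ n" using step(1) by (simp add: le_imp_power_dvd)
  have "a (Suc n) mod int p ^ k = (a (Suc n) mod int p ^ n) mod int p ^ k"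
    by (rule mod_mod_cancel[symmetric, OF dv])
  also have "a (Suc n) mod int p ^ n = a n" using Z unfolding Zp_def by simp
  also have "a n mod int p ^ k = a k" by (rule step(3))
  finally show ?case .
qed

lemma Zp_cong:
  assumes "Zp p a" "k \<le> n" shows "[a n = a k] (mod int p ^ k)"
  using Zp_mod[OF assms] Zp_mod[OF assms(1) order_refl[of k]] unfolding cong_def by simp

lemma sq4_compat:
  assumes "Zp p t" shows "n \<le> m \<Longrightarrow> [(\<lambda>n. (t n)^2 - 4) m = (\<lambda>n. (t n)^2 - 4) n] (mod int p ^ n)"
  using Zp_cong[OF assms] by (auto intro!: cong_diff cong_pow)

lemma B_arg_cases:
  "B_arg_p p (x,y,z) \<in> {\<lambda>n. (x n)^2 - 4, \<lambda>n. (y n)^2 - 4, \<lambda>n. (z n)^2 - 4}"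
  unfolding B_arg_p_def Let_def by auto

lemma E_perm1: assumes "[x^2+y^2+z^2-x*y*z = m] (mod M)" shows "[y^2+x^2+z^2-y*x*(z::int) = m] (mod M)"
proof -
  have eq: "y^2+x^2+z^2-y*x*z = x^2+y^2+z^2-x*y*z" by (simp add: algebra_simps)
  show ?thesis unfolding eq by (rule assms)
qed

lemma E_perm2: assumes "[x^2+y^2+z^2-x*y*z = m] (mod M)" shows "[z^2+y^2+x^2-z*y*(x::int) = m] (mod M)"
proof -
  have eq: "z^2+y^2+x^2-z*y*x = x^2+y^2+z^2-x*y*z" by (simp add: algebra_simps)
  show ?thesis unfolding eq by (rule assms)
qed

lemma inv_p_zero:
  assumes p: "prime p" and pt: "U_Zp_point p r v P"
    and H: "\<And>n x y z. n \<ge> N0 \<Longrightarrow> [x^2+y^2+z^2-x*y*z = 4 + r*v^2] (mod (int p ^ n)) \<Longrightarrow>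
       \<exists>X Y Z. \<not> (int p dvd X \<and> int p dvd Y \<and> int p dvd Z) \<and> [(x^2-4)*X^2 + r*Y^2 = Z^2] (mod (int p ^ n))"
  shows "inv_p r p P = 0"
proof -
  obtain x y z where P: "P = (x,y,z)" by (cases P) auto
  have Zx: "Zp p x" and Zy: "Zp p y" and Zz: "Zp p z"
    and E: "\<And>n. [(x n)^2 + (y n)^2 + (z n)^2 - x n * y n * z n = 4 + r * v^2] (mod (int p ^ n))"
    using pt unfolding P U_Zp_point_def by auto
  have tx: "hilbert_trivial_p p (\<lambda>n. (x n)^2 - 4) r"
  proof (rule hilbert_trivial_from_levels[OF p sq4_compat[OF Zx], of N0])
    fix n assume n: "N0 \<le> n"
    show "\<exists>X Y Z. \<not> (int p dvd X \<and> int p dvd Y \<and> int p dvd Z) \<and> [(x n ^ 2 - 4) * X^2 + r * Y^2 = Z^2] (mod (int p ^ n))"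
      by (rule H[OF n E[of n]])
  qed
  have ty: "hilbert_trivial_p p (\<lambda>n. (y n)^2 - 4) r"
  proof (rule hilbert_trivial_from_levels[OF p sq4_compat[OF Zy], of N0])
    fix n assume n: "N0 \<le> n"
    show "\<exists>X Y Z. \<not> (int p dvd X \<and> int p dvd Y \<and> int p dvd Z) \<and> [(y n ^ 2 - 4) * X^2 + r * Y^2 = Z^2] (mod (int p ^ n))"
      by (rule H[OF n E_perm1[OF E[of n]]])
  qed
  have tz: "hilbert_trivial_p p (\<lambda>n. (z n)^2 - 4) r"
  proof (rule hilbert_trivial_from_levels[OF p sq4_compat[OF Zz], of N0])
    fix n assume n: "N0 \<le> n"
    show "\<exists>X Y Z. \<not> (int p dvd X \<and> int p dvd Y \<and> int p dvd Z) \<and> [(z n ^ 2 - 4) * X^2 + r * Y^2 = Z^2] (mod (int p ^ n))"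
      by (rule H[OF n E_perm2[OF E[of n]]])
  qed
  have "hilbert_trivial_p p (B_arg_p p P) r" using B_arg_cases[of p x y z] tx ty tz unfolding P by auto
  thus ?thesis unfolding inv_p_def by simp
qed

lemma not_trivial_aux:
  assumes t: "hilbert_trivial_p p (\<lambda>n. (t n)^2 - 4) r" and N: "N \<ge> 1"
    and H: "\<And>X Y Z. [((t N)^2-4)*X^2 + r*Y^2 = Z^2] (mod (int p ^ N)) \<Longrightarrow> int p dvd X \<and> int p dvd Y \<and> int p dvd Z"
  shows False
proof -
  obtain X Y Z where Z: "Zp p X" "Zp p Y" "Zp p Z" "\<not> (int p dvd X 1 \<and> int p dvd Y 1 \<and> int p dvd Z 1)"
    and C: "\<And>n. [((t n)^2 - 4) * (X n)^2 + r * (Y n)^2 = (Z n)^2] (mod (int p ^ n))"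
    using t unfolding hilbert_trivial_p_def by blast
  have d: "int p dvd X N \<and> int p dvd Y N \<and> int p dvd Z N" using H[OF C[of N]] .
  have "X N mod int p = X 1" "Y N mod int p = Y 1" "Z N mod int p = Z 1"
    using Zp_mod[OF Z(1) N] Zp_mod[OF Z(2) N] Zp_mod[OF Z(3) N] by simp_all
  hence "int p dvd X 1 \<and> int p dvd Y 1 \<and> int p dvd Z 1" using d by (metis dvd_mod_iff dvd_refl)
  thus False using Z(4) by blast
qed

lemma inv_p_half:
  assumes pt: "U_Zp_point p r v P" and N: "N \<ge> 1"
    and H: "\<And>x y z X Y Z. [x^2+y^2+z^2-x*y*z = 4 + r*v^2] (mod (int p ^ N)) \<Longrightarrow>
       [(x^2-4)*X^2 + r*Y^2 = Z^2] (mod (int p ^ N)) \<Longrightarrow> int p dvd X \<and> int p dvd Y \<and> int p dvd Z"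
  shows "inv_p r p P = 1/2"
proof -
  obtain x y z where P: "P = (x,y,z)" by (cases P) auto
  have E: "\<And>n. [(x n)^2 + (y n)^2 + (z n)^2 - x n * y n * z n = 4 + r * v^2] (mod (int p ^ n))"
    using pt unfolding P U_Zp_point_def by auto
  have tx: "\<not> hilbert_trivial_p p (\<lambda>n. (x n)^2 - 4) r"
    using not_trivial_aux[OF _ N] H[OF E] by blast
  have ty: "\<not> hilbert_trivial_p p (\<lambda>n. (y n)^2 - 4) r"
    using not_trivial_aux[OF _ N] H[OF E_perm1[OF E]] by blast
  have tz: "\<not> hilbert_trivial_p p (\<lambda>n. (z n)^2 - 4) r"
    using not_trivial_aux[OF _ N] H[OF E_perm2[OF E]] by blast
  have "\<not> hilbert_trivial_p p (B_arg_p p P) r" using B_arg_cases[of p x y z] tx ty tz unfolding P by auto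
  thus ?thesis unfolding inv_p_def by simp
qed

lemma inv_R_zero:
  assumes h: "r > 0 \<or> 4 + r * v^2 < 0" and pt: "U_R_point r v P"
  shows "inv_R r P = 0"
proof -
  obtain x y z where P: "P = (x,y,z)" by (cases P) auto
  have E: "x^2 + y^2 + z^2 - x*y*z = 4 + of_int r * (of_int v)^2" using pt unfolding P U_R_point_def by simp
  show ?thesis
  proof (cases "r > 0")
    case True
    have "hilbert_trivial_R (B_arg_R P) r" unfolding hilbert_trivial_R_def
      by (rule exI[of _ 0], rule exI[of _ 1], rule exI[of _ "sqrt (of_int r)"]) (use True in simp)
    thus ?thesis unfolding inv_R_def by simp
  next
    case False
    hence "4 + r * v^2 < 0" using h by simp
    hence "real_of_int (4 + r * v^2) < 0" using of_int_less_0_iff by blast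
    hence m: "4 + of_int r * (of_int v)^2 < (0::real)" by simp
    have x4: "x^2 > 4"
    proof (rule ccontr)
      assume "\<not> x^2 > 4"
      hence "0 \<le> 4 - x^2" by simp
      hence "0 \<le> (2*y - x*z)^2 + (4 - x^2) * z^2 + 4 * x^2" by (intro add_nonneg_nonneg) auto
      also have "(2*y - x*z)^2 + (4 - x^2) * z^2 + 4 * x^2 = 4 * (x^2 + y^2 + z^2 - x*y*z)"
        by (simp add: power2_eq_square algebra_simps)
      finally show False using E m by simp
    qed
    hence "B_arg_R P = x^2 - 4" unfolding P B_arg_R_def by simp
    moreover have "hilbert_trivial_R (x^2 - 4) r" unfolding hilbert_trivial_R_def
      by (rule exI[of _ 1], rule exI[of _ 0], rule exI[of _ "sqrt (x^2 - 4)"]) (use x4 in simp)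
    ultimately show ?thesis unfolding inv_R_def by simp
  qed
qed

lemma half_not_int: "(1/2::rat) \<notin> \<int>"
proof
  assume "(1/2::rat) \<in> \<int>"
  then obtain k where k: "(1/2::rat) = of_int k" by (auto elim: Ints_cases)
  hence "(of_int (2 * k) :: rat) = of_int 1" by simp
  hence "(1::int) = 2 * k" by (simp only: of_int_eq_iff)
  thus False by presburger
qed

theorem proposition5p6:
  fixes r v :: int
  assumes hr: "r \<in> {2, -2, -3, 12, -12}"
    and hv0: "v \<noteq> 0"
    and h2: "r = 2 \<Longrightarrow> \<forall>p\<in>prime_factors v. p mod 8 \<in> {1, 7}"
    and h12: "r = 12 \<Longrightarrow> (\<forall>p\<in>prime_factors v. p mod 12 \<in> {1, 11}) \<and> [v^2 = 25] (mod 32)"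
    and hm2: "r = -2 \<Longrightarrow> \<forall>p\<in>prime_factors v. p mod 8 \<in> {1, 3}"
    and hm3: "r = -3 \<Longrightarrow> \<forall>p\<in>prime_factors v. p mod 3 = 1"
    and hm12: "r = -12 \<Longrightarrow> \<forall>p\<in>prime_factors v. p mod 3 = 1"
    and hv1: "r \<in> {-2, -3} \<Longrightarrow> v \<noteq> 1 \<and> v \<noteq> -1"
  shows "adelic_points_B r v = {}"
proof (rule ccontr)
  assume "adelic_points_B r v \<noteq> {}"
  then obtain Pinf Pf where mem: "(Pinf, Pf) \<in> adelic_points_B r v" by auto
  have R: "U_R_point r v Pinf" and Zpts: "\<And>p. prime p \<Longrightarrow> U_Zp_point p r v (Pf p)"
    and sumint: "inv_R r Pinf + (\<Sum>p\<in>{p. prime p \<and> inv_p r p (Pf p) \<noteq> 0}. inv_p r p (Pf p)) \<in> \<int>"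
    using mem unfolding adelic_points_B_def by auto
  have pf: "\<And>p::int. prime p \<Longrightarrow> p dvd v \<Longrightarrow> p \<in> prime_factors v"
    using hv0 by (simp add: in_prime_factors_iff)
  have oddv: "odd v"
  proof
    assume "even v"
    hence m: "(2::int) \<in> prime_factors v" using pf by simp
    show False using hr h2[OF _] h12 hm2 hm3 hm12 m by fastforce
  qed
  have not3: "r \<in> {-3,12,-12} \<Longrightarrow> \<not> 3 dvd v"
  proof
    assume "r \<in> {-3,12,-12}" "3 dvd v"
    hence m: "(3::int) \<in> prime_factors v" using pf by simp
    show False using \<open>r \<in> {-3,12,-12}\<close> h12 hm3 hm12 m by fastforce
  qed
  define q :: nat where "q = (if r \<in> {2,-2} then 2 else 3)"
  have invq: "inv_p r q (Pf q) = 1/2"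
  proof (cases "r \<in> {2,-2}")
    case True
    hence q: "q = 2" unfolding q_def by simp
    have pt: "U_Zp_point 2 r v (Pf 2)" by (rule Zpts) simp
    have H: "[(x^2-4)*X^2 + r*Y^2 = Z^2] (mod (int 2 ^ 5)) \<Longrightarrow> int 2 dvd X \<and> int 2 dvd Y \<and> int 2 dvd Z"
      if E: "[x^2+y^2+z^2-x*y*z = 4 + r*v^2] (mod (int 2 ^ 5))" for x y z X Y Z :: int
    proof -
      assume Hc: "[(x^2-4)*X^2 + r*Y^2 = Z^2] (mod (int 2 ^ 5))"
      show ?thesis
      proof (cases "r = 2")
        case True
        thus ?thesis using SP2a[OF oddv, of x y z X Y Z] E Hc by simp
      next
        case False
        hence "r = -2" using \<open>r \<in> {2,-2}\<close> by simp
        thus ?thesis using SP2b[OF oddv, of x y z X Y Z] E Hc by simp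
      qed
    qed
    show ?thesis unfolding q by (rule inv_p_half[OF pt, of 5]) (use H in auto)
  next
    case False
    hence q: "q = 3" and r3: "r \<in> {-3,12,-12}" unfolding q_def using hr by auto
    have pt: "U_Zp_point 3 r v (Pf 3)" by (rule Zpts) simp
    have H: "[(x^2-4)*X^2 + r*Y^2 = Z^2] (mod (int 3 ^ 2)) \<Longrightarrow> int 3 dvd X \<and> int 3 dvd Y \<and> int 3 dvd Z"
      if E: "[x^2+y^2+z^2-x*y*z = 4 + r*v^2] (mod (int 3 ^ 2))" for x y z X Y Z :: int
      using SP3[OF r3 not3[OF r3], of x y z X Y Z] E by simp
    show ?thesis unfolding q by (rule inv_p_half[OF pt, of 2]) (use H in auto)
  qed
  have invo: "inv_p r p (Pf p) = 0" if p: "prime p" "p \<noteq> q" for p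
  proof (cases "p = 2")
    case True
    hence r3: "r \<in> {-3,12,-12}" using p(2) unfolding q_def using hr by (auto split: if_splits)
    have pt: "U_Zp_point 2 r v (Pf 2)" by (rule Zpts) simp
    obtain d :: int where rd: "[r*d^2 = 4] (mod 8)"
    proof (cases "r = -3")
      case True thus ?thesis using that[of 2] by (simp add: cong_def)
    next
      case False thus ?thesis using that[of 1] r3 by (auto simp: cong_def)
    qed
    have H: "\<exists>X Y Z. \<not> (int 2 dvd X \<and> int 2 dvd Y \<and> int 2 dvd Z) \<and> [(x^2-4)*X^2 + r*Y^2 = Z^2] (mod (int 2 ^ n))"
      if n: "n \<ge> 7" and E: "[x^2+y^2+z^2-x*y*z = 4 + r*v^2] (mod (int 2 ^ n))" for n x y z
    proof -
      have E': "[x^2+y^2+z^2-x*y*z = 4 + r*v^2] (mod (2 ^ n))" using E by simp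
      have "odd x \<or> odd y \<or> odd z"
      proof -
        consider "r = -3" | "r = 12" | "r = -12" using r3 by auto
        thus ?thesis
        proof cases
          case 1 thus ?thesis using SO_m3[OF oddv _ , of n x y z] E' n by simp
        next
          case 2 thus ?thesis using SO_12[OF conjunct2[OF h12[OF 2]] n, of x y z] E' by simp
        next
          case 3 thus ?thesis using SO_m12[OF oddv _ , of n x y z] E' n by simp
        qed
      qed
      thus ?thesis using level2_any[OF rd E'] by simp
    qed
    show ?thesis unfolding True by (rule inv_p_zero[OF _ pt, of 7]) (use H in auto)
  next
    case False
    have pi: "prime (int p)" using p(1) by simp
    have "p > 2" using prime_ge_2_nat[OF p(1)] False by simp
    hence op: "odd (int p)" using p(1) prime_odd_nat by simp
    have p3: "r \<in> {-3,12,-12} \<Longrightarrow> p \<noteq> 3" using p(2) unfolding q_def using hr by (auto split: if_splits)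
    have ndr: "\<not> int p dvd r"
    proof
      assume d: "int p dvd r"
      have p2: "int p \<ge> 2" using pi prime_ge_2_int by blast
      have nd2: "\<not> int p dvd 2"
      proof
        assume "int p dvd 2" hence "int p \<le> 2" using zdvd_imp_le[of "int p" 2] by simp
        hence "p = 2" using p2 by simp
        thus False using False by simp
      qed
      have nd3: "r \<in> {-3,12,-12} \<Longrightarrow> \<not> int p dvd 3"
      proof
        assume "r \<in> {-3,12,-12}" "int p dvd 3" hence "int p \<le> 3" using zdvd_imp_le[of "int p" 3] by simp
        hence "p = 2 \<or> p = 3" using p2 by auto
        thus False using False p3[OF \<open>r \<in> {-3,12,-12}\<close>] by simp
      qed
      consider "r = 2" | "r = -2" | "r = -3" | "r = 12" | "r = -12" using hr by auto
      thus False
      proof cases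
        case 1 thus False using d nd2 by simp
      next
        case 2 thus False using d nd2 by simp
      next
        case 3 thus False using d nd3 by simp
      next
        case 4
        have "int p dvd 2 * 6" using d 4 by simp
        hence "int p dvd 2 \<or> int p dvd 6" by (rule prime_dvd_multD[OF pi])
        hence "int p dvd 6" using nd2 by simp
        hence "int p dvd 2 * 3" by simp
        hence "int p dvd 2 \<or> int p dvd 3" by (rule prime_dvd_multD[OF pi])
        thus False using nd2 nd3 4 by simp
      next
        case 5
        have "int p dvd 2 * 6" using d 5 by simp
        hence "int p dvd 2 \<or> int p dvd 6" by (rule prime_dvd_multD[OF pi])
        hence "int p dvd 6" using nd2 by simp
        hence "int p dvd 2 * 3" by simp
        hence "int p dvd 2 \<or> int p dvd 3" by (rule prime_dvd_multD[OF pi])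
        thus False using nd2 nd3 5 by simp
      qed
    qed
    have qr: "\<exists>s. [s^2 = r] (mod int p)" if dv: "int p dvd v"
    proof -
      have pfv: "int p \<in> prime_factors v" using pf[OF pi dv] .
      have zm: "\<And>k. int p mod int k = int (p mod k)" by (simp add: zmod_int)
      consider "r = 2" | "r = -2" | "r = -3" | "r = 12" | "r = -12" using hr by auto
      thus ?thesis
      proof cases
        case 1
        have "p mod 8 = 1 \<or> p mod 8 = 7" using h2[OF 1] pfv zm[of 8] by auto
        thus ?thesis using qr_two[OF p(1)] 1 by simp
      next
        case 2
        have "p mod 8 = 1 \<or> p mod 8 = 3" using hm2[OF 2] pfv zm[of 8] by auto
        thus ?thesis using qr_mtwo[OF p(1)] 2 by simp
      next
        case 3
        have "p mod 3 = 1" using hm3[OF 3] pfv zm[of 3] by auto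
        thus ?thesis using qr_mthree[OF p(1)] 3 by simp
      next
        case 4
        have "p mod 12 = 1 \<or> p mod 12 = 11" using h12[OF 4] pfv zm[of 12] by auto
        then obtain s where "[s^2 = 3] (mod int p)" using qr_three[OF p(1)] by blast
        hence "[4 * s^2 = 4 * 3] (mod int p)" by (intro cong_mult cong_refl)
        hence "[(2*s)^2 = 12] (mod int p)" by (simp add: power_mult_distrib)
        thus ?thesis using 4 by blast
      next
        case 5
        have "p mod 3 = 1" using hm12[OF 5] pfv zm[of 3] by auto
        then obtain s where "[s^2 = -3] (mod int p)" using qr_mthree[OF p(1)] by blast
        hence "[4 * s^2 = 4 * (-3)] (mod int p)" by (intro cong_mult cong_refl)
        hence "[(2*s)^2 = -12] (mod int p)" by (simp add: power_mult_distrib)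
        thus ?thesis using 5 by blast
      qed
    qed
    show ?thesis
      by (rule inv_p_zero[OF p(1) Zpts[OF p(1)], of 0]) (use level_odd[OF pi op ndr qr] in auto)
  qed
  have S: "{p. prime p \<and> inv_p r p (Pf p) \<noteq> 0} = {q}"
  proof -
    have "prime q" unfolding q_def by auto
    thus ?thesis using invq invo by auto
  qed
  have invR: "inv_R r Pinf = 0"
  proof (rule inv_R_zero[OF _ R])
    consider "r = 2" | "r = 12" | "r = -2" | "r = -3" | "r = -12" using hr by auto
    thus "r > 0 \<or> 4 + r * v^2 < 0"
    proof cases
      case 3
      have "v^2 \<ge> 4"
      proof -
        have "\<bar>v\<bar> \<ge> 2" using hv0 hv1 3 by auto
        hence "\<bar>v\<bar>^2 \<ge> 2^2" by (rule power_mono) simp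
        thus ?thesis by simp
      qed
      thus ?thesis using 3 by simp
    next
      case 4
      have "v^2 \<ge> 4"
      proof -
        have "\<bar>v\<bar> \<ge> 2" using hv0 hv1 4 by auto
        hence "\<bar>v\<bar>^2 \<ge> 2^2" by (rule power_mono) simp
        thus ?thesis by simp
      qed
      thus ?thesis using 4 by simp
    next
      case 5
      have "v^2 \<ge> 1"
      proof -
        have "\<bar>v\<bar> \<ge> 1" using hv0 by auto
        hence "\<bar>v\<bar>^2 \<ge> 1^2" by (rule power_mono) simp
        thus ?thesis by simp
      qed
      thus ?thesis using 5 by simp
    qed simp_all
  qed
  have e: "inv_R r Pinf + (\<Sum>p\<in>{p. prime p \<and> inv_p r p (Pf p) \<noteq> 0}. inv_p r p (Pf p)) = 1/2"
    unfolding S invR using invq by simp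
  from sumint have "(1/2::rat) \<in> \<int>" unfolding e .
  thus False using half_not_int by blast
qed

end
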